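(* Let $B$ be an $n\times n$ matrix all of whose entries are $-1$ or $+1$, and suppose all eigenvalues of $B$ are real and positive. Then $n=1$ and $B=[1]$.
   Context: Eigenvalues are taken over $\mathbb{C}$. *)

theory Defs
  imports "Jordan_Normal_Form.Char_Poly"
begin

end

theory Submission
  imports Defs "Jordan_Normal_Form.Schur_Decomposition"
begin

definition mtr :: "'a::comm_ring_1 mat \<Rightarrow> 'a" where
  "mtr A = (\<Sum>i<dim_row A. A $$ (i,i))"

lemma mtr_comm:
  assumes A: "A \<in> carrier_mat n m" and B: "B \<in> carrier_mat m n"
  shows "mtr (A * B) = mtr (B * A)"
proof -
  have "mtr (A * B) = (\<Sum>i<n. \<Sum>k<m. A $$ (i,k) * B $$ (k,i))"
    using A B by (auto simp: mtr_def scalar_prod_def atLeast0LessThan intro!: sum.cong)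
  also have "\<dots> = (\<Sum>k<m. \<Sum>i<n. B $$ (k,i) * A $$ (i,k))"
    by (subst sum.swap) (simp add: mult.commute)
  also have "\<dots> = mtr (B * A)"
    using A B by (auto simp: mtr_def scalar_prod_def atLeast0LessThan intro!: sum.cong)
  finally show ?thesis .
qed

lemma prod_dvd_pow:
  fixes f :: "nat \<Rightarrow> int"
  assumes "finite S" "\<And>i. i \<in> S \<Longrightarrow> d dvd f i"
  shows "d ^ card S dvd prod f S"
  using assms
proof (induction S rule: finite_induct)
  case empty then show ?case by simp
next
  case (insert x F)
  then show ?case by (simp add: mult_dvd_mono)
qed

lemma det_pm1_dvd:
  fixes B :: "int mat"
  assumes n: "n \<ge> 1" and B: "B \<in> carrier_mat n n"
    and pm: "\<And>i j. i < n \<Longrightarrow> j < n \<Longrightarrow> B $$ (i, j) = 1 \<or> B $$ (i, j) = -1"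
  shows "2 ^ (n - 1) dvd det B"
proof -
  define E :: "int mat" where "E = mat n n (\<lambda>(i,j). if i = j then 1 else if j = 0 then -1 else 0)"
  have E: "E \<in> carrier_mat n n" unfolding E_def by simp
  have dE: "det E = 1"
  proof -
    have "det E = prod_list (diag_mat E)"
      by (rule det_lower_triangular[OF _ E]) (auto simp: E_def)
    also have "diag_mat E = replicate n 1"
      by (rule nth_equalityI) (auto simp: diag_mat_def E_def)
    finally show ?thesis by simp
  qed
  define B' where "B' = E * B"
  have B': "B' \<in> carrier_mat n n" using E B by (simp add: B'_def)
  have dB: "det B' = det B" unfolding B'_def using det_mult[OF E B] dE by simp
  have ent: "B' $$ (i,j) = (if i = 0 then B $$ (0,j) else B $$ (i,j) - B $$ (0,j))"
    if "i < n" "j < n" for i j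
  proof -
    have "B' $$ (i,j) = (\<Sum>k\<in>{0..<n}. E $$ (i,k) * B $$ (k,j))"
      using that E B by (simp add: B'_def scalar_prod_def)
    also have "\<dots> = (\<Sum>k\<in>{0..<n}. (if k = i then B $$ (k,j) else 0) + (if k = 0 \<and> i \<noteq> 0 then - B $$ (k,j) else 0))"
      using that by (intro sum.cong) (auto simp: E_def)
    also have "\<dots> = (if i = 0 then B $$ (0,j) else B $$ (i,j) - B $$ (0,j))"
      using that n by (simp add: sum.distrib)
    finally show ?thesis .
  qed
  have "2 ^ (n - 1) dvd (\<Prod>i = 0..<n. B' $$ (i, p i))" if p: "p permutes {0..<n}" for p
  proof -
    have pi: "i < n \<Longrightarrow> p i < n" for i using p by (simp add: permutes_in_image)
    have "{0..<n} = insert 0 {1..<n}" using n by auto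
    hence "(\<Prod>i = 0..<n. B' $$ (i, p i)) = B' $$ (0, p 0) * (\<Prod>i = 1..<n. B' $$ (i, p i))"
      by simp
    moreover have "2 ^ card {1..<n} dvd (\<Prod>i = 1..<n. B' $$ (i, p i))"
    proof (rule prod_dvd_pow)
      fix i assume i: "i \<in> {1..<n}"
      hence "i < n" "p i < n" "0 < n" using pi by auto
      thus "2 dvd B' $$ (i, p i)" using ent[of i "p i"] i pm[of i "p i"] pm[of 0 "p i"]
        by auto
    qed simp
    ultimately show ?thesis by simp
  qed
  hence "2 ^ (n - 1) dvd det B'"
    unfolding det_def'[OF B'] by (intro dvd_sum) (simp add: dvd_mult)
  thus ?thesis using dB by simp
qed

theorem mainTheorem6:
  fixes B :: "int mat" and n :: nat
  assumes "n \<ge> 1"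
    and "B \<in> carrier_mat n n"
    and "\<And>i j. i < n \<Longrightarrow> j < n \<Longrightarrow> B $$ (i, j) = 1 \<or> B $$ (i, j) = -1"
    and "\<And>mu. eigenvalue (map_mat (of_int :: int \<Rightarrow> complex) B) mu \<Longrightarrow>
            mu \<in> \<real> \<and> Re mu > 0"
  shows "n = 1 \<and> B = mat 1 1 (\<lambda>_. 1)"
proof -
  note n = assms(1) and Bc = assms(2) and pm = assms(3) and ev = assms(4)
  define A where "A = map_mat (of_int :: int \<Rightarrow> complex) B"
  have A: "A \<in> carrier_mat n n" using Bc by (simp add: A_def)
  obtain es where cp: "char_poly A = (\<Prod> a \<leftarrow> es. [:- a, 1:])" and len: "length es = n"
    using char_poly_factorized[OF A] by blast
  obtain C P Q where schur: "schur_decomposition A es = (C,P,Q)"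
    by (cases "schur_decomposition A es") auto
  from schur_decomposition[OF A cp schur]
  have sim: "similar_mat_wit A C P Q" and ut: "upper_triangular C" and dg: "diag_mat C = es"
    by auto
  from sim A have C: "C \<in> carrier_mat n n" and P: "P \<in> carrier_mat n n" and Q: "Q \<in> carrier_mat n n"
    and PQ: "P * Q = 1\<^sub>m n" and QP: "Q * P = 1\<^sub>m n" and APCQ: "A = P * C * Q"
    unfolding similar_mat_wit_def Let_def by auto
  have esC: "es ! i = C $$ (i,i)" if "i < n" for i
    using dg that C by (auto simp: diag_mat_def)
  have eig: "eigenvalue A (es ! i)" if "i < n" for i
  proof -
    have "poly (char_poly A) (es ! i) = 0"
      unfolding cp poly_prod_list prod_list_zero_iff using that len
      by (auto simp: in_set_conv_nth intro!: exI[of _ i])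
    thus ?thesis using eigenvalue_root_char_poly[OF A] by simp
  qed
  define r where "r i = Re (es ! i)" for i
  have rpos: "r i > 0" if "i < n" for i using ev[OF eig[OF that, unfolded A_def]] by (simp add: r_def)
  have esr: "es ! i = complex_of_real (r i)" if "i < n" for i
    using ev[OF eig[OF that, unfolded A_def]] unfolding r_def by (simp add: complex_is_Real_iff)
  have distn: "distinct [0..<n]" by simp
  have "det A = det P * det C * det Q"
    using APCQ P C Q by (simp add: det_mult[of _ n])
  also have "\<dots> = det C * det (P * Q)" using P Q by (simp add: det_mult[of _ n])
  also have "\<dots> = det C" using PQ by simp
  also have "\<dots> = prod_list (diag_mat C)" by (rule det_upper_triangular[OF ut C])
  also have "\<dots> = (\<Prod>i\<in>{0..<n}. C $$ (i,i))"
    using C prod.distinct_set_conv_list[OF distn, of "\<lambda>i. C $$ (i,i)"] by (simp add: diag_mat_def)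
  also have "\<dots> = (\<Prod>i\<in>{0..<n}. complex_of_real (r i))"
    by (intro prod.cong) (auto simp: esC[symmetric] esr)
  finally have detA: "complex_of_int (det B) = complex_of_real (\<Prod>i\<in>{0..<n}. r i)"
    unfolding A_def by (simp add: of_int_hom.hom_det)
  hence detr: "real_of_int (det B) = (\<Prod>i\<in>{0..<n}. r i)"
    by (metis of_real_eq_iff of_real_of_int_eq)
  have "mtr A = mtr (P * (C * Q))" using APCQ P C Q by simp
  also have "\<dots> = mtr ((C * Q) * P)" using P C Q by (intro mtr_comm[of _ n n]) auto
  also have "\<dots> = mtr C" using P C Q QP by simp
  finally have "mtr A = mtr C" .
  hence "complex_of_int (\<Sum>i<n. B $$ (i,i)) = complex_of_real (\<Sum>i<n. r i)"
    using A C Bc by (simp add: mtr_def A_def esC[symmetric] esr)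
  hence trr: "real_of_int (\<Sum>i<n. B $$ (i,i)) = (\<Sum>i<n. r i)"
    by (metis of_real_eq_iff of_real_of_int_eq)
  have "(\<Sum>i<n. B $$ (i,i)) \<le> (\<Sum>i<n. 1)"
    by (intro sum_mono) (use pm in fastforce)
  hence "real_of_int (\<Sum>i<n. B $$ (i,i)) \<le> real n" by (simp del: of_int_sum)
  hence sumr: "(\<Sum>i<n. r i) \<le> real n" using trr by linarith
  have "(\<Prod>i\<in>{0..<n}. r i) \<le> (\<Prod>i\<in>{0..<n}. exp (r i - 1))"
  proof (rule prod_mono)
    fix i assume "i \<in> {0..<n}"
    thus "0 \<le> r i \<and> r i \<le> exp (r i - 1)" using rpos[of i] exp_ge_add_one_self[of "r i - 1"] by auto
  qed
  also have "\<dots> = exp (\<Sum>i<n. r i - 1)" by (simp add: exp_sum atLeast0LessThan)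
  also have "\<dots> \<le> 1" using sumr by (simp add: sum_subtractf)
  finally have "real_of_int (det B) \<le> 1" using detr by simp
  moreover have "real_of_int (det B) > 0" using detr rpos by (metis atLeastLessThan_iff prod_pos)
  ultimately have d1: "det B = 1" by linarith
  have "2 ^ (n - 1) dvd (1::int)" using det_pm1_dvd[OF n Bc pm] d1 by simp
  hence "(2::int) ^ (n - 1) = 1" by simp
  hence n1: "n = 1" using n by simp
  have B1: "B \<in> carrier_mat 1 1" using Bc n1 by simp
  have "B $$ (0,0) = 1" using det_single[OF B1] d1 by simp
  hence "B = mat 1 1 (\<lambda>_. 1)" using B1 by (intro eq_matI) auto
  with n1 show ?thesis by simp
qed

end
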